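(* Fix $0<p<1$ and $m\ge1$. For each word $w$ with $|w|\le m-1$ define the weighted sibling difference $h^{(p)}_w=(1-p)1_{C_{w0}}-p\,1_{C_{w2}}$, and set $\phi=1_C$, $q=p^2+(1-p)^2$, $\mu(w)=\mu_p(C_w)$. Then: (1) The family $\{\phi\}\cup\{h^{(p)}_w:|w|\le m-1\}$ is an orthogonal basis of $\mathcal F_m$, and $\|h^{(p)}_w\|^2=p(1-p)\mu(w)$. (2) $K_m$ leaves $\mathcal F_m$ invariant and vanishes on $\mathcal F_m^{\perp}$. (3) For every $w$ with $|w|\le m-1$, $\langle h^{(p)}_w,K_m\phi\rangle=p(1-p)(2p-1)\mu(w)^2\sum_{j=0}^{m-|w|-1}q^j$. (4) For every $w$ with $|w|\le m-1$, $\langle h^{(p)}_w,K_mh^{(p)}_w\rangle=2p^2(1-p)^2\mu(w)^2\sum_{j=0}^{m-|w|-1}q^j$. (5) Let $u\ne v$ be words with $|u|,|v|\le m-1$. If $u,v$ are incomparable then $\langle h^{(p)}_u,K_mh^{(p)}_v\rangle=0$. If $u$ is a proper prefix of $v$, then $\langle h^{(p)}_u,K_mh^{(p)}_v\rangle=p(1-p)^2(2p-1)\mu(v)^2\sum_{j=0}^{m-|v|-1}q^j$ if $v$ begins with $u0$, and $=-p^2(1-p)(2p-1)\mu(v)^2\sum_{j=0}^{m-|v|-1}q^j$ if $v$ begins with $u2$. Consequently, in the orthonormal basis $e_\phi=\phi$, $e_w=h^{(p)}_w/\sqrt{p(1-p)\mu(w)}$ ($|w|\le m-1$), the matrix of $K_m|_{\mathcal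 F_m}$ is self-adjoint and its difference–difference block is tree-banded: $\langle e_v,K_me_u\rangle=0$ unless $u$ and $v$ are comparable. Moreover, $p=\tfrac12$ is the unique parameter in $(0,1)$ for which this matrix is diagonal in the weighted Haar basis.
   Context: Let $S_0(x)=x/3$, $S_2(x)=(x+2)/3$ on $[0,1]$ and let $C$ be the middle-third Cantor set ($C=S_0(C)\cup S_2(C)$). For $0<p<1$, $\mu_p$ is the unique Borel probability measure on $[0,1]$ with $\mu_p=p\,\mu_p\circ S_0^{-1}+(1-p)\,\mu_p\circ S_2^{-1}$ (supported on $C$). Finite words $w=(w_1,\dots,w_n)\in\{0,2\}^n$ have length $|w|=n$; $\varnothing$ is the empty word; $wa$ is concatenation. $u$ is a prefix of $v$ if $v$ extends $u$; $u,v$ are comparable if one is a prefix of the other. $S_w=S_{w_1}\circ\cdots\circ S_{w_n}$ ($S_\varnothing=\mathrm{id}$), and $C_w=S_w(C)$; thus $\mu_p(C_{w0})=p\mu_p(C_w)$, $\mu_p(C_{w2})=(1-p)\mu_p(C_w)$. The inner product on $L^2(\mu_p)$ is $\langle f,g\rangle=\int\overline f g\,d\mu_p$. $\mathcal F_m=\mathrm{span}\{1_{C_u}:|u|\le m\}$ and $K_mf=\sum_{|u|\le m}\langle 1_{C_u},f\rangle1_{C_u}$ for $f\in L^2(\mu_p)$. *)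

theory Defs
  imports "HOL-Probability.Probability" "HOL-Library.Sublist"
begin

definition S :: "nat \<Rightarrow> real \<Rightarrow> real" where
  "S d x = (x + real d) / 3"

definition words :: "nat \<Rightarrow> nat list set" where
  "words n = {w. length w = n \<and> set w \<subseteq> {0, 2}}"

definition words_upto :: "nat \<Rightarrow> nat list set" where
  "words_upto n = {w. length w \<le> n \<and> set w \<subseteq> {0, 2}}"

fun Sw :: "nat list \<Rightarrow> real \<Rightarrow> real" where
  "Sw [] = id"
| "Sw (a # w) = S a \<circ> Sw w"

definition cantor :: "real set" where
  "cantor = (\<Inter>n. \<Union>w\<in>words n. Sw w ` {0..1})"

definition Cw :: "nat list \<Rightarrow> real set" where
  "Cw w = Sw w ` cantor"

definition ip :: "real measure \<Rightarrow> (real \<Rightarrow> complex) \<Rightarrow> (real \<Rightarrow> complex) \<Rightarrow> complex" where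
  "ip M f g = (LINT x|M. cnj (f x) * g x)"

definition L2 :: "real measure \<Rightarrow> (real \<Rightarrow> complex) set" where
  "L2 M = {f. f \<in> borel_measurable M \<and> integrable M (\<lambda>x. (cmod (f x))\<^sup>2)}"

definition Fm :: "nat \<Rightarrow> (real \<Rightarrow> complex) set" where
  "Fm m = {f. \<exists>c :: nat list \<Rightarrow> complex.
              f = (\<lambda>x. \<Sum>u\<in>words_upto m. c u * indicator (Cw u) x)}"

definition Km :: "real measure \<Rightarrow> nat \<Rightarrow> (real \<Rightarrow> complex) \<Rightarrow> (real \<Rightarrow> complex)" where
  "Km M m f = (\<lambda>x. \<Sum>u\<in>words_upto m. ip M (indicator (Cw u)) f * indicator (Cw u) x)"

definition phi :: "real \<Rightarrow> complex" where
  "phi = indicator cantor"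

definition hw :: "real \<Rightarrow> nat list \<Rightarrow> real \<Rightarrow> complex" where
  "hw p w = (\<lambda>x. complex_of_real (1 - p) * indicator (Cw (w @ [0])) x
                 - complex_of_real p * indicator (Cw (w @ [2])) x)"

definition orthogonal_basis_of ::
  "real measure \<Rightarrow> 'i set \<Rightarrow> ('i \<Rightarrow> real \<Rightarrow> complex) \<Rightarrow> (real \<Rightarrow> complex) set \<Rightarrow> bool" where
  "orthogonal_basis_of M I e V \<longleftrightarrow>
     finite I \<and>
     (\<forall>i\<in>I. e i \<in> V \<and> ip M (e i) (e i) \<noteq> 0) \<and>
     (\<forall>i\<in>I. \<forall>j\<in>I. i \<noteq> j \<longrightarrow> ip M (e i) (e j) = 0) \<and>
     (\<forall>f\<in>V. \<exists>c. f = (\<lambda>x. \<Sum>i\<in>I. c i * e i x))"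

definition haar_index :: "nat \<Rightarrow> nat list option set" where
  "haar_index m = insert None (Some ` words_upto (m - 1))"

definition haar :: "real \<Rightarrow> nat list option \<Rightarrow> real \<Rightarrow> complex" where
  "haar p i = (case i of None \<Rightarrow> phi | Some w \<Rightarrow> hw p w)"

definition ebasis :: "real measure \<Rightarrow> real \<Rightarrow> nat list option \<Rightarrow> real \<Rightarrow> complex" where
  "ebasis M p i = (case i of None \<Rightarrow> phi
     | Some w \<Rightarrow> (\<lambda>x. hw p w x / complex_of_real (sqrt (p * (1 - p) * measure M (Cw w)))))"

end

theory Submission
  imports Defs
begin



section \<open>Structure of the Cantor pieces\<close>

lemma S_inj: "inj (S a)" by (auto simp: S_def inj_def)

lemma mem_S_image: "x \<in> S a ` A \<longleftrightarrow> 3 * x - real a \<in> A"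
proof
  assume "x \<in> S a ` A"
  then obtain y where y: "y \<in> A" "x = (y + real a) / 3" by (auto simp: S_def)
  from y(2) have "3 * x - real a = y" by simp
  with y(1) show "3 * x - real a \<in> A" by simp
next
  assume h: "3 * x - real a \<in> A"
  have "x = S a (3 * x - real a)" by (simp add: S_def)
  then show "x \<in> S a ` A" using h by (rule image_eqI)
qed

lemma Sw_append: "Sw (w @ v) = Sw w \<circ> Sw v"
  by (induction w) auto

lemma Sw_inj: "inj (Sw w)"
proof (induction w)
  case Nil then show ?case by simp
next
  case (Cons a w)
  have "inj (S a \<circ> Sw w)" by (rule inj_compose[OF S_inj Cons.IH])
  then show ?case by (simp add: comp_def)
qed

lemma S_cont: "isCont (S a) x"
  unfolding S_def by (intro continuous_intros) auto

lemma Sw_cont: "continuous_on A (Sw w)"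
proof (induction w arbitrary: A)
  case Nil then show ?case by (simp add: continuous_on_id)
next
  case (Cons a w)
  have "continuous_on UNIV (S a)" using S_cont by (simp add: continuous_at_imp_continuous_on)
  have "continuous_on A (S a \<circ> Sw w)"
    by (intro continuous_on_compose Cons.IH continuous_on_subset[OF \<open>continuous_on UNIV (S a)\<close>]) auto
  then show ?case by (simp add: comp_def)
qed

definition lev :: "nat \<Rightarrow> real set" where
  "lev n = (\<Union>w\<in>words n. Sw w ` {0..1})"

lemma words_0: "words 0 = {[]}" by (auto simp: words_def)

lemma words_Suc: "words (Suc n) = (\<lambda>w. 0 # w) ` words n \<union> (\<lambda>w. 2 # w) ` words n"
  unfolding words_def by (auto simp: length_Suc_conv image_iff)

lemma finite_words_upto: "finite (words_upto n)"
proof -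
  have "words_upto n = {xs. set xs \<subseteq> {0,2} \<and> length xs \<le> n}" by (auto simp: words_upto_def)
  then show ?thesis using finite_lists_length_le[of "{0::nat,2}" n] by simp
qed

lemma finite_words: "finite (words n)"
  by (rule finite_subset[OF _ finite_words_upto[of n]]) (auto simp: words_def words_upto_def)

lemma lev_0: "lev 0 = {0..1}" by (simp add: lev_def words_0)

lemma lev_Suc: "lev (Suc n) = S 0 ` lev n \<union> S 2 ` lev n"
  unfolding lev_def words_Suc by (auto simp: image_UN image_comp)

lemma S_range: "a \<in> {0,2} \<Longrightarrow> A \<subseteq> {0..1} \<Longrightarrow> S a ` A \<subseteq> {0..1}"
  by (auto simp: S_def)

lemma lev_sub: "lev n \<subseteq> {0..1}"
  by (induction n) (auto simp: lev_0 lev_Suc S_def subset_iff)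

lemma cantor_lev: "cantor = (\<Inter>n. lev n)" by (simp add: cantor_def lev_def)

lemma cantor_sub: "cantor \<subseteq> {0..1}" using lev_sub[of 0] by (auto simp: cantor_lev)

lemma lev_compact: "compact (lev n)"
  unfolding lev_def
  by (intro compact_UN finite_words compact_continuous_image Sw_cont compact_Icc)

lemma cantor_compact: "compact cantor"
proof -
  have "closed cantor" unfolding cantor_lev
    by (intro closed_INT ballI compact_imp_closed lev_compact)
  moreover have "bounded cantor" by (rule bounded_subset[OF bounded_cbox]) (use cantor_sub in auto)
  ultimately show ?thesis by (simp add: compact_eq_bounded_closed)
qed

lemma cantor_eq: "cantor = S 0 ` cantor \<union> S 2 ` cantor"
proof
  show "S 0 ` cantor \<union> S 2 ` cantor \<subseteq> cantor"
  proof
    fix x assume "x \<in> S 0 ` cantor \<union> S 2 ` cantor"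
    then obtain a where a: "a \<in> {0,2}" "x \<in> S a ` cantor" by auto
    then have y: "3 * x - real a \<in> lev n" for n by (auto simp: mem_S_image cantor_lev)
    have "x \<in> lev n" for n
    proof (cases n)
      case 0
      have "x \<in> S a ` lev 0" using y[of 0] by (simp add: mem_S_image)
      then show ?thesis using 0 S_range[OF a(1) lev_sub[of 0]] by (auto simp: lev_0)
    next
      case (Suc k)
      then show ?thesis using y[of k] a(1) by (auto simp: lev_Suc mem_S_image)
    qed
    then show "x \<in> cantor" by (simp add: cantor_lev)
  qed
next
  show "cantor \<subseteq> S 0 ` cantor \<union> S 2 ` cantor"
  proof
    fix x assume x: "x \<in> cantor"
    have h: "3 * x \<in> lev n \<or> 3 * x - 2 \<in> lev n" for n
    proof -
      have "x \<in> lev (Suc n)" using x by (simp add: cantor_lev)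
      then show ?thesis by (simp add: lev_Suc mem_S_image)
    qed
    show "x \<in> S 0 ` cantor \<union> S 2 ` cantor"
    proof (cases "x \<le> 1/2")
      case True
      have "3 * x \<in> lev n" for n
      proof -
        have "3 * x - 2 \<notin> lev n"
        proof
          assume "3 * x - 2 \<in> lev n"
          then have "3 * x - 2 \<in> {0..1}" using lev_sub by blast
          then show False using True by simp
        qed
        then show ?thesis using h[of n] by blast
      qed
      then show ?thesis by (auto simp: mem_S_image cantor_lev)
    next
      case False
      have "3 * x - 2 \<in> lev n" for n
      proof -
        have "3 * x \<notin> lev n"
        proof
          assume "3 * x \<in> lev n"
          then have "3 * x \<in> {0..1}" using lev_sub by blast
          then show False using False by simp
        qed
        then show ?thesis using h[of n] by blast
      qed
      then show ?thesis by (auto simp: mem_S_image cantor_lev)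
    qed
  qed
qed

lemma S_cantor_sub: "a \<in> {0,2} \<Longrightarrow> S a ` cantor \<subseteq> cantor"
  using cantor_eq by blast

lemma S_disj: "A \<subseteq> {0..1} \<Longrightarrow> B \<subseteq> {0..1} \<Longrightarrow> S 0 ` A \<inter> S 2 ` B = {}"
proof -
  assume A: "A \<subseteq> {0..1}" and B: "B \<subseteq> {0..1}"
  have "S 0 ` A \<subseteq> {..1/3}" using A by (auto simp: S_def)
  moreover have "S 2 ` B \<subseteq> {2/3..}" using B by (auto simp: S_def)
  ultimately show ?thesis by fastforce
qed

lemma Cw_Nil: "Cw [] = cantor" by (simp add: Cw_def)

lemma Cw_Cons: "Cw (a # w) = S a ` Cw w" by (simp add: Cw_def image_comp)

lemma Cw_append: "Cw (u @ v) = Sw u ` Cw v" by (simp add: Cw_def Sw_append image_comp)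

lemma Cw_sub_cantor: "set w \<subseteq> {0,2} \<Longrightarrow> Cw w \<subseteq> cantor"
proof (induction w)
  case Nil then show ?case by (simp add: Cw_Nil)
next
  case (Cons a w)
  then have "S a ` Cw w \<subseteq> S a ` cantor" by auto
  also have "\<dots> \<subseteq> cantor" using Cons.prems by (intro S_cantor_sub) auto
  finally show ?case by (simp add: Cw_Cons)
qed

lemma Cw_sub01: "set w \<subseteq> {0,2} \<Longrightarrow> Cw w \<subseteq> {0..1}"
  using Cw_sub_cantor cantor_sub by blast

lemma Cw_split: "Cw w = Cw (w @ [0]) \<union> Cw (w @ [2])"
proof -
  have "Cw w = Sw w ` (S 0 ` cantor \<union> S 2 ` cantor)" using cantor_eq by (simp add: Cw_def)
  then show ?thesis by (simp add: Cw_append Cw_Cons Cw_Nil image_Un)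
qed

lemma Cw_split_disj: "Cw (w @ [0]) \<inter> Cw (w @ [2]) = {}"
  using S_disj[OF cantor_sub cantor_sub]
  by (simp add: Cw_append Cw_Cons Cw_Nil image_Int[OF Sw_inj, symmetric])

lemma Cw_prefix: "prefix u v \<Longrightarrow> set v \<subseteq> {0,2} \<Longrightarrow> Cw v \<subseteq> Cw u"
proof -
  assume "prefix u v" "set v \<subseteq> {0,2}"
  then obtain z where z: "v = u @ z" "set z \<subseteq> {0,2}" by (auto simp: prefix_def)
  have "Cw v = Sw u ` Cw z" using z by (simp add: Cw_append)
  also have "\<dots> \<subseteq> Sw u ` cantor" using Cw_sub_cantor[OF z(2)] by auto
  finally show ?thesis by (simp add: Cw_def)
qed

lemma Cw_incomp: "set u \<subseteq> {0,2} \<Longrightarrow> set v \<subseteq> {0,2} \<Longrightarrow> \<not> prefix u v \<Longrightarrow> \<not> prefix v u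
   \<Longrightarrow> Cw u \<inter> Cw v = {}"
proof (induction u arbitrary: v)
  case Nil then show ?case by simp
next
  case (Cons a u)
  then obtain b v' where v: "v = b # v'" by (cases v) auto
  show ?case
  proof (cases "a = b")
    case True
    then have "Cw u \<inter> Cw v' = {}" using Cons.IH[of v'] Cons.prems v by simp
    then show ?thesis using v True by (simp add: Cw_Cons image_Int[OF S_inj, symmetric])
  next
    case False
    have s: "Cw u \<subseteq> {0..1}" "Cw v' \<subseteq> {0..1}" using Cons.prems v by (auto intro!: Cw_sub01)
    have "a = 0 \<and> b = 2 \<or> a = 2 \<and> b = 0" using Cons.prems v False by auto
    then show ?thesis
    proof (elim disjE)
      assume "a = 0 \<and> b = 2" then show ?thesis using S_disj[OF s] v by (simp add: Cw_Cons)
    next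
      assume "a = 2 \<and> b = 0" then show ?thesis using S_disj[OF s(2) s(1)] v by (simp add: Cw_Cons Int_commute)
    qed
  qed
qed

lemma Cw_compact: "compact (Cw w)"
  unfolding Cw_def by (intro compact_continuous_image Sw_cont cantor_compact)

lemma Cw_borel: "Cw w \<in> sets borel"
  by (simp add: Cw_compact compact_imp_closed borel_closed)

lemma lev_borel: "lev n \<in> sets borel"
  by (simp add: lev_compact compact_imp_closed borel_closed)

lemma cantor_borel: "cantor \<in> sets borel"
  by (simp add: cantor_compact compact_imp_closed borel_closed)

lemma S_vimage_borel: "A \<in> sets borel \<Longrightarrow> S a -` A \<in> sets borel"
proof -
  assume "A \<in> sets borel"
  moreover have "S a \<in> borel_measurable borel" unfolding S_def by measurable
  ultimately show ?thesis using measurable_sets[of "S a" borel borel A] by simp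
qed




locale cm =
  fixes p :: real and M :: "real measure"
  assumes p0: "0 < p" and p1: "p < 1" and probM: "prob_space M" and sb: "sets M = sets borel"
    and unit: "emeasure M {0..1} = 1"
    and ss: "\<forall>A\<in>sets borel. emeasure M A
       = ennreal p * emeasure M (S 0 -` A) + ennreal (1 - p) * emeasure M (S 2 -` A)"

sublocale cm \<subseteq> prob_space M by (rule probM)

context cm begin

lemma space_M: "space M = UNIV" using sets_eq_imp_space_eq[OF sb] by simp

lemma ss_real:
  assumes A: "A \<in> sets borel"
  shows "measure M A = p * measure M (S 0 -` A) + (1 - p) * measure M (S 2 -` A)"
proof -
  have "ennreal (measure M A) = ennreal p * ennreal (measure M (S 0 -` A))
          + ennreal (1 - p) * ennreal (measure M (S 2 -` A))"
    using ss A by (simp add: emeasure_eq_measure)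
  also have "\<dots> = ennreal (p * measure M (S 0 -` A) + (1 - p) * measure M (S 2 -` A))"
    using p0 p1 by (subst ennreal_plus) (auto simp: ennreal_mult measure_nonneg)
  finally show ?thesis
    by (subst (asm) ennreal_inj) (auto intro!: add_nonneg_nonneg mult_nonneg_nonneg
        simp: measure_nonneg less_imp_le p0 p1)
qed

lemma meas01: "measure M {0..1} = 1" using unit by (simp add: emeasure_eq_measure)

lemma null_out:
  assumes "B \<inter> {0..1} = {}" shows "measure M B = 0"
proof -
  have c: "{0..1::real} \<in> sets M" unfolding sb by measurable
  have "measure M B \<le> measure M (space M - {0..1})"
  proof (rule finite_measure_mono)
    show "space M - {0..1} \<in> sets M" using c by (rule sets.compl_sets)
  qed (use assms in \<open>auto simp: space_M\<close>)
  also have "\<dots> = 0" using prob_compl[OF c] meas01 by simp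
  finally show ?thesis using measure_nonneg[of M B] by linarith
qed

definition cf :: "nat \<Rightarrow> real" where "cf a = (if a = 0 then p else 1 - p)"

lemma mu_Cons:
  assumes a: "a \<in> {0,2}" and w: "set w \<subseteq> {0,2}"
  shows "measure M (Cw (a # w)) = cf a * measure M (Cw w)"
proof -
  let ?X = "Cw w"
  have X01: "?X \<subseteq> {0..1}" using Cw_sub01[OF w] .
  have A: "S a ` ?X \<in> sets borel" using Cw_borel[of "a#w"] by (simp add: Cw_Cons)
  have same: "S a -` (S a ` ?X) = ?X" by (simp add: inj_vimage_image_eq S_inj)
  have other: "measure M (S b -` (S a ` ?X)) = 0" if "b \<in> {0,2}" "b \<noteq> a" for b
  proof (rule null_out)
    show "S b -` (S a ` ?X) \<inter> {0..1} = {}"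
    proof (rule ccontr)
      assume "S b -` (S a ` ?X) \<inter> {0..1} \<noteq> {}"
      then obtain x where x: "x \<in> {0..1}" "S b x \<in> S a ` ?X" by blast
      then have "3 * S b x - real a \<in> {0..1}" using X01 by (auto simp: mem_S_image)
      moreover have "3 * S b x - real a = x + real b - real a" by (simp add: S_def)
      ultimately have "x + real b - real a \<in> {0..1}" by simp
      then show False using x(1) a that by auto
    qed
  qed
  have eq: "measure M (Cw (a#w)) = p * measure M (S 0 -` (S a ` ?X)) + (1-p) * measure M (S 2 -` (S a ` ?X))"
    using ss_real[OF A] by (simp add: Cw_Cons)
  from a consider "a = 0" | "a = 2" by auto
  then show ?thesis
  proof cases
    case 1 then show ?thesis using eq same other[of 2] by (simp add: cf_def)
  next
    case 2 then show ?thesis using eq same other[of 0] by (simp add: cf_def)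
  qed
qed

lemma lev_meas: "measure M (lev n) = 1"
proof (induction n)
  case 0 show ?case using meas01 by (simp add: lev_0)
next
  case (Suc n)
  have B: "lev (Suc n) \<in> sets borel" by (rule lev_borel)
  have ge: "measure M (S b -` lev (Suc n)) \<ge> 1" if "b \<in> {0,2}" for b
  proof -
    have "lev n \<subseteq> S b -` lev (Suc n)" using that by (auto simp: lev_Suc)
    moreover have "S b -` lev (Suc n) \<in> sets M" using S_vimage_borel[OF B] by (simp add: sb)
    ultimately have "measure M (lev n) \<le> measure M (S b -` lev (Suc n))" by (rule finite_measure_mono)
    then show ?thesis using Suc.IH by simp
  qed
  have le: "measure M (S b -` lev (Suc n)) \<le> 1" for b by (rule prob_le_1)
  have "measure M (S 0 -` lev (Suc n)) = 1" "measure M (S 2 -` lev (Suc n)) = 1"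
    using ge[of 0] ge[of 2] le[of 0] le[of 2] by auto
  then show ?case using ss_real[OF B] by simp
qed

lemma cantor_meas: "measure M cantor = 1"
proof -
  have "AE x in M. x \<in> lev n" for n
    using AE_in_set_eq_1[of "lev n"] lev_meas lev_borel by (simp add: sb)
  then have "AE x in M. \<forall>n. x \<in> lev n" by (simp add: AE_all_countable)
  then have "AE x in M. x \<in> cantor" by (simp add: cantor_lev)
  then show ?thesis using AE_in_set_eq_1[of cantor] cantor_borel by (simp add: sb)
qed

abbreviation mu where "mu w \<equiv> measure M (Cw w)"

lemma mu_Nil: "mu [] = 1" using cantor_meas by (simp add: Cw_Nil)

lemma mu_append: "set w \<subseteq> {0,2} \<Longrightarrow> set v \<subseteq> {0,2} \<Longrightarrow> mu (w @ v) = mu w * mu v"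
  by (induction w) (auto simp: mu_Nil mu_Cons mult.assoc)

lemma mu_snoc: "set w \<subseteq> {0,2} \<Longrightarrow> a \<in> {0,2} \<Longrightarrow> mu (w @ [a]) = cf a * mu w"
  using mu_append[of w "[a]"] mu_Cons[of a "[]"] mu_Nil by (simp add: mult.commute)

lemma cf_pos: "a \<in> {0,2} \<Longrightarrow> cf a > 0" using p0 p1 by (auto simp: cf_def)

lemma mu_pos: "set w \<subseteq> {0,2} \<Longrightarrow> mu w > 0"
  by (induction w) (auto simp: mu_Nil mu_Cons cf_pos)

lemma meas_int:
  assumes u: "set u \<subseteq> {0,2}" and x: "set x \<subseteq> {0,2}"
  shows "measure M (Cw u \<inter> Cw x) = (if prefix x u then mu u else if prefix u x then mu x else 0)"
proof (cases "prefix x u")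
  case True
  then have "Cw u \<subseteq> Cw x" using Cw_prefix u by blast
  then show ?thesis using True by (simp add: Int_absorb2)
next
  case False
  show ?thesis
  proof (cases "prefix u x")
    case True
    then have "Cw x \<subseteq> Cw u" using Cw_prefix x by blast
    then show ?thesis using True False by (simp add: Int_absorb1)
  next
    case F2: False
    then show ?thesis using False Cw_incomp[OF u x] by simp
  qed
qed

end



definition bm :: "real measure \<Rightarrow> (real \<Rightarrow> complex) \<Rightarrow> bool" where
  "bm N f \<longleftrightarrow> f \<in> borel_measurable N \<and> (\<exists>B. \<forall>x. cmod (f x) \<le> B)"

lemma meas_cnj: "f \<in> borel_measurable N \<Longrightarrow> (\<lambda>x. cnj (f x)) \<in> borel_measurable N"
proof -
  assume f: "f \<in> borel_measurable N"
  have "continuous_on UNIV cnj" by (intro linear_continuous_on bounded_linear_cnj)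
  then show ?thesis by (rule borel_measurable_continuous_on[OF _ f])
qed

lemma ip_cnj: "cnj (ip N f g) = ip N g f"
proof -
  have "ip N g f = integral\<^sup>L N (\<lambda>x. cnj (cnj (f x) * g x))"
    unfolding ip_def by (rule Bochner_Integration.integral_cong) (auto simp: mult.commute)
  also have "\<dots> = cnj (ip N f g)" unfolding ip_def by (simp only: Bochner_Integration.integral_cnj)
  finally show ?thesis by simp
qed

lemma ip_div_right: "ip N f (\<lambda>x. g x / c) = ip N f g / c"
  by (simp add: ip_def)

lemma ip_div_left: "ip N (\<lambda>x. f x / c) g = ip N f g / cnj c"
  by (simp add: ip_def)

lemma Km_div: "Km N m (\<lambda>x. g x / c) = (\<lambda>x. Km N m g x / c)"
  by (simp add: Km_def ip_div_right sum_divide_distrib)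

lemma words_upto_set: "x \<in> words_upto m \<Longrightarrow> set x \<subseteq> {0,2}"
  by (simp add: words_upto_def)

lemma words_upto_len: "x \<in> words_upto m \<Longrightarrow> length x \<le> m"
  by (simp add: words_upto_def)

lemma words_upto_0: "words_upto 0 = {[]}" by (auto simp: words_upto_def)

lemma words_upto_Suc: "words_upto (Suc k) = words_upto k \<union> words (Suc k)"
  by (auto simp: words_upto_def words_def)

lemma words_upto_Suc_disj: "words_upto k \<inter> words (Suc k) = {}"
  by (auto simp: words_upto_def words_def)

lemma pfx_excl:
  assumes h: "prefix (w @ [a]) x" and ab: "a \<noteq> b"
  shows "\<not> prefix (w @ [b]) x \<and> \<not> prefix x (w @ [b]) \<and> \<not> prefix x w"
proof -
  have n1: "\<not> prefix (w @ [b]) x"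
  proof
    assume "prefix (w @ [b]) x"
    then have "prefix (w @ [a]) (w @ [b]) \<or> prefix (w @ [b]) (w @ [a])"
      by (rule prefix_same_cases[OF h])
    then show False using ab by simp
  qed
  have n3: "\<not> prefix x w"
  proof
    assume "prefix x w"
    then have "prefix (w @ [a]) w" by (rule prefix_order.trans[OF h])
    then have "length (w @ [a]) \<le> length w" by (rule prefix_length_le)
    then show False by simp
  qed
  have n2: "\<not> prefix x (w @ [b])"
  proof
    assume "prefix x (w @ [b])"
    then have "x = w @ [b] \<or> prefix x w" by simp
    then show False using n3 h ab by auto
  qed
  show ?thesis using n1 n2 n3 by blast
qed

lemma pfx_snoc_prefix: "prefix (w @ [a]) x \<Longrightarrow> prefix w x"
  using prefix_order.trans[of w "w @ [a]" x] by simp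

context cm begin

lemma bm_integrable:
  assumes f: "bm M f" and g: "bm M g"
  shows "integrable M (\<lambda>x. cnj (f x) * g x)"
proof -
  obtain B1 B2 where b1: "\<forall>x. cmod (f x) \<le> B1" and b2: "\<forall>x. cmod (g x) \<le> B2"
    and mf: "f \<in> borel_measurable M" and mg: "g \<in> borel_measurable M"
    using f g by (auto simp: bm_def)
  have m: "(\<lambda>x. cnj (f x) * g x) \<in> borel_measurable M"
    by (intro borel_measurable_times meas_cnj mf mg)
  have B1: "0 \<le> B1" using b1 norm_ge_zero order_trans by blast
  have "cmod (f x) * cmod (g x) \<le> B1 * B2" for x
    by (rule mult_mono) (use b1 b2 B1 in auto)
  then have "AE x in M. norm (cnj (f x) * g x) \<le> B1 * B2"
    by (auto simp: norm_mult)
  then show ?thesis using m by (rule integrable_const_bound)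
qed

lemma bm_ind: "A \<in> sets borel \<Longrightarrow> bm M (indicator A)"
  unfolding bm_def by (auto intro!: exI[of _ 1] borel_measurable_indicator simp: sb split: split_indicator)

lemma bm_lin:
  assumes f: "bm M f" and g: "bm M g"
  shows "bm M (\<lambda>x. a * f x + b * g x)"
proof -
  obtain B1 B2 where b1: "\<forall>x. cmod (f x) \<le> B1" and b2: "\<forall>x. cmod (g x) \<le> B2"
    and mf[measurable]: "f \<in> borel_measurable M" and mg[measurable]: "g \<in> borel_measurable M"
    using f g by (auto simp: bm_def)
  have m: "(\<lambda>x. a * f x + b * g x) \<in> borel_measurable M" by measurable
  have "cmod (a * f x + b * g x) \<le> cmod a * B1 + cmod b * B2" for x
  proof -
    have "cmod (a * f x + b * g x) \<le> cmod a * cmod (f x) + cmod b * cmod (g x)"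
      using norm_triangle_ineq[of "a * f x" "b * g x"] by (simp add: norm_mult)
    also have "\<dots> \<le> cmod a * B1 + cmod b * B2"
      using b1 b2 by (intro add_mono mult_left_mono) auto
    finally show ?thesis .
  qed
  then show ?thesis using m unfolding bm_def by blast
qed

lemma bm_zero: "bm M (\<lambda>x. 0)" unfolding bm_def by (auto intro!: exI[of _ 0])

lemma bm_sum:
  assumes "finite I" "\<forall>i\<in>I. bm M (g i)"
  shows "bm M (\<lambda>x. \<Sum>i\<in>I. c i * g i x)"
  using assms
proof (induction I rule: finite_induct)
  case empty then show ?case by (simp add: bm_zero)
next
  case (insert i I)
  have "bm M (\<lambda>x. c i * g i x + 1 * (\<Sum>i\<in>I. c i * g i x))"
    using insert by (intro bm_lin) auto
  then show ?case using insert by simp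
qed

lemma bm_div: "bm M f \<Longrightarrow> bm M (\<lambda>x. f x / c)"
  using bm_lin[of f f "1 / c" 0] by simp

lemma hw_eq: "hw p w = (\<lambda>x. complex_of_real (1 - p) * indicator (Cw (w @ [0])) x
   + (- complex_of_real p) * indicator (Cw (w @ [2])) x)"
  by (simp add: hw_def fun_eq_iff)

lemma bm_hw: "bm M (hw p w)"
  unfolding hw_eq by (intro bm_lin bm_ind Cw_borel)

lemma phi_eq: "phi = indicator (Cw [])" by (simp add: phi_def Cw_Nil)

lemma bm_phi: "bm M phi"
  unfolding phi_eq by (intro bm_ind Cw_borel)

lemma bm_Km: "bm M (Km N m g)"
  unfolding Km_def by (intro bm_sum ballI bm_ind Cw_borel finite_words_upto)

lemma ip_ind:
  assumes "A \<in> sets borel" "B \<in> sets borel"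
  shows "ip M (indicator A) (indicator B) = complex_of_real (measure M (A \<inter> B))"
proof -
  have "(\<lambda>x. cnj (indicator A x) * indicator B x) = (\<lambda>x. complex_of_real (indicator (A \<inter> B) x))"
    by (simp add: fun_eq_iff split: split_indicator)
  then show ?thesis by (simp add: ip_def space_M)
qed

lemma ip_sum_right:
  assumes f: "bm M f" and I: "finite I" and g: "\<forall>i\<in>I. bm M (g i)"
  shows "ip M f (\<lambda>x. \<Sum>i\<in>I. c i * g i x) = (\<Sum>i\<in>I. c i * ip M f (g i))"
proof -
  have "(\<lambda>x. cnj (f x) * (\<Sum>i\<in>I. c i * g i x)) = (\<lambda>x. \<Sum>i\<in>I. c i * (cnj (f x) * g i x))"
    by (simp add: fun_eq_iff sum_distrib_left algebra_simps)
  then have "ip M f (\<lambda>x. \<Sum>i\<in>I. c i * g i x) = integral\<^sup>L M (\<lambda>x. \<Sum>i\<in>I. c i * (cnj (f x) * g i x))"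
    by (simp add: ip_def)
  also have "\<dots> = (\<Sum>i\<in>I. integral\<^sup>L M (\<lambda>x. c i * (cnj (f x) * g i x)))"
    by (rule Bochner_Integration.integral_sum[where f="\<lambda>i x. c i * (cnj (f x) * g i x)"]) (use f g in \<open>auto intro!: integrable_mult_right bm_integrable\<close>)
  also have "\<dots> = (\<Sum>i\<in>I. c i * ip M f (g i))" by (simp add: ip_def)
  finally show ?thesis .
qed

lemma ip_lin_right:
  assumes f: "bm M f" and g1: "bm M g1" and g2: "bm M g2"
  shows "ip M f (\<lambda>x. a * g1 x + b * g2 x) = a * ip M f g1 + b * ip M f g2"
proof -
  have i1: "integrable M (\<lambda>x. cnj (f x) * g1 x)" and i2: "integrable M (\<lambda>x. cnj (f x) * g2 x)"
    using f g1 g2 by (auto intro: bm_integrable)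
  have "(\<lambda>x. cnj (f x) * (a * g1 x + b * g2 x)) = (\<lambda>x. a * (cnj (f x) * g1 x) + b * (cnj (f x) * g2 x))"
    by (simp add: fun_eq_iff algebra_simps)
  then show ?thesis using i1 i2 by (simp add: ip_def)
qed

lemma ip_Km:
  assumes f: "bm M f"
  shows "ip M f (Km M m g) = (\<Sum>u\<in>words_upto m. ip M (indicator (Cw u)) g * ip M f (indicator (Cw u)))"
  unfolding Km_def
  by (rule ip_sum_right[where c="\<lambda>u. ip M (indicator (Cw u)) g" and g="\<lambda>u. indicator (Cw u)", OF f])
     (auto simp: finite_words_upto bm_ind Cw_borel)

lemma Km_selfadj:
  assumes "bm M f" "bm M g"
  shows "ip M f (Km M m g) = cnj (ip M g (Km M m f))"
  using assms by (simp add: ip_Km cnj_sum ip_cnj mult.commute)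

definition aw :: "nat list \<Rightarrow> nat list \<Rightarrow> real" where
  "aw w x = (if prefix (w @ [0]) x then (1 - p) * mu x
             else if prefix (w @ [2]) x then - p * mu x else 0)"

lemma ip_ind_hw:
  assumes w: "set w \<subseteq> {0,2}" and x: "set x \<subseteq> {0,2}"
  shows "ip M (indicator (Cw x)) (hw p w) = complex_of_real (aw w x)"
proof -
  have w0: "set (w @ [0]) \<subseteq> {0,2}" and w2: "set (w @ [2]) \<subseteq> {0,2}" using w by auto
  have e: "ip M (indicator (Cw x)) (hw p w)
      = complex_of_real ((1 - p) * measure M (Cw x \<inter> Cw (w @ [0])) - p * measure M (Cw x \<inter> Cw (w @ [2])))"
    unfolding hw_eq
    by (subst ip_lin_right) (auto intro!: bm_ind Cw_borel simp: ip_ind Cw_borel)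
  have m0: "mu (w @ [0]) = p * mu w" and m2: "mu (w @ [2]) = (1 - p) * mu w"
    using mu_snoc[OF w, of 0] mu_snoc[OF w, of 2] by (auto simp: cf_def)
  show ?thesis
  proof (cases "prefix (w @ [0]) x")
    case True
    with pfx_excl[OF True, of 2] show ?thesis
      by (simp add: e meas_int[OF x w0] meas_int[OF x w2] aw_def)
  next
    case F0: False
    show ?thesis
    proof (cases "prefix (w @ [2]) x")
      case True
      with pfx_excl[OF True, of 0] F0 show ?thesis
        by (simp add: e meas_int[OF x w0] meas_int[OF x w2] aw_def)
    next
      case F2: False
      have "prefix x (w @ [0]) \<longleftrightarrow> prefix x w" "prefix x (w @ [2]) \<longleftrightarrow> prefix x w"
        using F0 F2 by auto
      then show ?thesis using F0 F2
        by (simp add: e meas_int[OF x w0] meas_int[OF x w2] aw_def m0 m2 algebra_simps)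
    qed
  qed
qed

lemma ip_hw_ind:
  "set w \<subseteq> {0,2} \<Longrightarrow> set x \<subseteq> {0,2} \<Longrightarrow> ip M (hw p w) (indicator (Cw x)) = complex_of_real (aw w x)"
  using ip_ind_hw[of w x] ip_cnj[of M "indicator (Cw x)" "hw p w"] by simp

lemma ip_ind_phi:
  "set x \<subseteq> {0,2} \<Longrightarrow> ip M (indicator (Cw x)) phi = complex_of_real (mu x)"
  unfolding phi_eq by (simp add: ip_ind Cw_borel meas_int)

lemma ip_phi_ind:
  "set x \<subseteq> {0,2} \<Longrightarrow> ip M phi (indicator (Cw x)) = complex_of_real (mu x)"
  using ip_ind_phi[of x] ip_cnj[of M "indicator (Cw x)" phi] by simp

lemma aw_nz: "aw v x \<noteq> 0 \<Longrightarrow> prefix v x"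
  by (auto simp: aw_def split: if_splits intro: pfx_snoc_prefix)

lemma ip_hw_Km_phi:
  assumes w: "set w \<subseteq> {0,2}"
  shows "ip M (hw p w) (Km M m phi) = complex_of_real (\<Sum>x\<in>words_upto m. mu x * aw w x)"
proof -
  have "ip M (hw p w) (Km M m phi)
     = (\<Sum>x\<in>words_upto m. ip M (indicator (Cw x)) phi * ip M (hw p w) (indicator (Cw x)))"
    by (rule ip_Km[OF bm_hw])
  also have "\<dots> = (\<Sum>x\<in>words_upto m. complex_of_real (mu x * aw w x))"
  proof (rule sum.cong[OF refl])
    fix x assume x: "x \<in> words_upto m"
    show "ip M (indicator (Cw x)) phi * ip M (hw p w) (indicator (Cw x)) = complex_of_real (mu x * aw w x)"
      using words_upto_set[OF x] w by (simp add: ip_ind_phi ip_hw_ind)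
  qed
  finally show ?thesis by simp
qed

lemma ip_hw_Km_hw:
  assumes u: "set u \<subseteq> {0,2}" and v: "set v \<subseteq> {0,2}"
  shows "ip M (hw p u) (Km M m (hw p v)) = complex_of_real (\<Sum>x\<in>words_upto m. aw v x * aw u x)"
proof -
  have "ip M (hw p u) (Km M m (hw p v))
     = (\<Sum>x\<in>words_upto m. ip M (indicator (Cw x)) (hw p v) * ip M (hw p u) (indicator (Cw x)))"
    by (rule ip_Km[OF bm_hw])
  also have "\<dots> = (\<Sum>x\<in>words_upto m. complex_of_real (aw v x * aw u x))"
  proof (rule sum.cong[OF refl])
    fix x assume x: "x \<in> words_upto m"
    show "ip M (indicator (Cw x)) (hw p v) * ip M (hw p u) (indicator (Cw x)) = complex_of_real (aw v x * aw u x)"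
      using words_upto_set[OF x] u v by (simp add: ip_ind_hw ip_hw_ind)
  qed
  finally show ?thesis by simp
qed

end



context cm begin

lemma sum_prefix:
  assumes z: "set z \<subseteq> {0,2}" "length z \<le> m"
  shows "(\<Sum>x\<in>words_upto m. if prefix z x then F x else 0) = (\<Sum>y\<in>words_upto (m - length z). F (z @ y))"
proof -
  have "(\<Sum>x\<in>words_upto m. if prefix z x then F x else 0) = (\<Sum>x\<in>{x\<in>words_upto m. prefix z x}. F x)"
    by (simp add: sum.inter_filter finite_words_upto)
  also have "{x\<in>words_upto m. prefix z x} = (\<lambda>y. z @ y) ` words_upto (m - length z)"
  proof
    show "{x\<in>words_upto m. prefix z x} \<subseteq> (\<lambda>y. z @ y) ` words_upto (m - length z)"
    proof
      fix x assume "x \<in> {x\<in>words_upto m. prefix z x}"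
      then obtain y where x: "x = z @ y" "x \<in> words_upto m" by (auto simp: prefix_def)
      then have "y \<in> words_upto (m - length z)" by (auto simp: words_upto_def)
      then show "x \<in> (\<lambda>y. z @ y) ` words_upto (m - length z)" using x by blast
    qed
    show "(\<lambda>y. z @ y) ` words_upto (m - length z) \<subseteq> {x\<in>words_upto m. prefix z x}"
      using z by (auto simp: words_upto_def)
  qed
  also have "(\<Sum>x\<in>(\<lambda>y. z @ y) ` words_upto (m - length z). F x) = (\<Sum>y\<in>words_upto (m - length z). F (z @ y))"
    by (subst sum.reindex) (auto simp: inj_on_def)
  finally show ?thesis .
qed

definition qq :: real where "qq = p\<^sup>2 + (1 - p)\<^sup>2"

lemma qq_pos: "qq > 0" using p0 by (simp add: qq_def add_pos_nonneg)

lemma sum_words_sq: "(\<Sum>y\<in>words j. (mu y)\<^sup>2) = qq ^ j"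
proof (induction j)
  case 0 then show ?case by (simp add: words_0 mu_Nil)
next
  case (Suc j)
  have d: "(\<lambda>w. 0#w) ` words j \<inter> (\<lambda>w. 2#w) ` words j = {}" by auto
  have s: "(\<Sum>y\<in>(\<lambda>w. a#w) ` words j. (mu y)\<^sup>2) = (cf a)\<^sup>2 * qq^j" if a: "a \<in> {0,2}" for a
  proof -
    have "(\<Sum>y\<in>(\<lambda>w. a#w) ` words j. (mu y)\<^sup>2) = (\<Sum>w\<in>words j. (mu (a#w))\<^sup>2)"
      by (subst sum.reindex) (auto simp: inj_on_def)
    also have "\<dots> = (\<Sum>w\<in>words j. (cf a)\<^sup>2 * (mu w)\<^sup>2)"
    proof (rule sum.cong[OF refl])
      fix w assume "w \<in> words j"
      then have "set w \<subseteq> {0,2}" by (simp add: words_def)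
      then show "(mu (a#w))\<^sup>2 = (cf a)\<^sup>2 * (mu w)\<^sup>2" using a by (simp add: mu_Cons power_mult_distrib)
    qed
    also have "\<dots> = (cf a)\<^sup>2 * qq^j" by (simp add: sum_distrib_left[symmetric] Suc.IH)
    finally show ?thesis .
  qed
  have "(\<Sum>y\<in>words (Suc j). (mu y)\<^sup>2)
      = (\<Sum>y\<in>(\<lambda>w. 0#w) ` words j. (mu y)\<^sup>2) + (\<Sum>y\<in>(\<lambda>w. 2#w) ` words j. (mu y)\<^sup>2)"
    unfolding words_Suc by (rule sum.union_disjoint) (auto simp: finite_words d)
  also have "\<dots> = (cf 0)\<^sup>2 * qq^j + (cf 2)\<^sup>2 * qq^j" using s[of 0] s[of 2] by simp
  also have "\<dots> = qq ^ Suc j" by (simp add: cf_def qq_def algebra_simps)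
  finally show ?case .
qed

lemma sum_upto_sq: "(\<Sum>y\<in>words_upto k. (mu y)\<^sup>2) = (\<Sum>j=0..k. qq^j)"
proof (induction k)
  case 0 show ?case by (simp add: words_upto_0 mu_Nil)
next
  case (Suc k)
  have "(\<Sum>y\<in>words_upto (Suc k). (mu y)\<^sup>2) = (\<Sum>y\<in>words_upto k. (mu y)\<^sup>2) + (\<Sum>y\<in>words (Suc k). (mu y)\<^sup>2)"
    unfolding words_upto_Suc
    by (rule sum.union_disjoint) (auto simp: finite_words_upto finite_words words_upto_Suc_disj)
  then show ?case using Suc.IH sum_words_sq by simp
qed

lemma Gsum:
  assumes z: "set z \<subseteq> {0,2}" "length z \<le> m"
  shows "(\<Sum>x\<in>words_upto m. if prefix z x then (mu x)\<^sup>2 else 0) = (mu z)\<^sup>2 * (\<Sum>j=0..m - length z. qq^j)"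
proof -
  have "(\<Sum>x\<in>words_upto m. if prefix z x then (mu x)\<^sup>2 else 0)
      = (\<Sum>y\<in>words_upto (m - length z). (mu (z @ y))\<^sup>2)" by (rule sum_prefix[OF z])
  also have "\<dots> = (\<Sum>y\<in>words_upto (m - length z). (mu z)\<^sup>2 * (mu y)\<^sup>2)"
  proof (rule sum.cong[OF refl])
    fix y assume "y \<in> words_upto (m - length z)"
    then have "set y \<subseteq> {0,2}" by (rule words_upto_set)
    then show "(mu (z @ y))\<^sup>2 = (mu z)\<^sup>2 * (mu y)\<^sup>2" using z by (simp add: mu_append power_mult_distrib)
  qed
  also have "\<dots> = (mu z)\<^sup>2 * (\<Sum>j=0..m - length z. qq^j)" by (simp add: sum_distrib_left[symmetric] sum_upto_sq)
  finally show ?thesis .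
qed

lemma T_sum:
  assumes w: "set w \<subseteq> {0,2}" "length w + 1 \<le> m"
  shows "(\<Sum>x\<in>words_upto m. mu x * aw w x)
     = p * (1 - p) * (2 * p - 1) * (mu w)\<^sup>2 * (\<Sum>j = 0..m - length w - 1. qq ^ j)"
proof -
  have pt: "mu x * aw w x = (1-p) * (if prefix (w@[0]) x then (mu x)\<^sup>2 else 0)
                            - p * (if prefix (w@[2]) x then (mu x)\<^sup>2 else 0)" for x
    using pfx_excl[of w 0 x 2] by (auto simp: aw_def power2_eq_square)
  have w0: "set (w@[0]) \<subseteq> {0,2}" "length (w@[0]) \<le> m" and w2: "set (w@[2]) \<subseteq> {0,2}" "length (w@[2]) \<le> m"
    using w by auto
  have m0: "mu (w @ [0]) = p * mu w" and m2: "mu (w @ [2]) = (1 - p) * mu w"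
    using mu_snoc[OF w(1), of 0] mu_snoc[OF w(1), of 2] by (auto simp: cf_def)
  let ?Q = "\<Sum>j = 0..m - length w - 1. qq ^ j"
  have "(\<Sum>x\<in>words_upto m. mu x * aw w x)
     = (1-p) * (\<Sum>x\<in>words_upto m. if prefix (w@[0]) x then (mu x)\<^sup>2 else 0)
       - p * (\<Sum>x\<in>words_upto m. if prefix (w@[2]) x then (mu x)\<^sup>2 else 0)"
    by (simp only: pt sum_subtractf sum_distrib_left)
  also have "\<dots> = (1-p) * ((p * mu w)\<^sup>2 * ?Q) - p * (((1 - p) * mu w)\<^sup>2 * ?Q)"
    using Gsum[OF w0] Gsum[OF w2] by (simp add: m0 m2)
  also have "\<dots> = p * (1 - p) * (2 * p - 1) * (mu w)\<^sup>2 * ?Q"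
    by (simp add: power2_eq_square algebra_simps)
  finally show ?thesis .
qed

lemma D_sum:
  assumes w: "set w \<subseteq> {0,2}" "length w + 1 \<le> m"
  shows "(\<Sum>x\<in>words_upto m. aw w x * aw w x)
     = 2 * p\<^sup>2 * (1 - p)\<^sup>2 * (mu w)\<^sup>2 * (\<Sum>j = 0..m - length w - 1. qq ^ j)"
proof -
  have pt: "aw w x * aw w x = (1-p)\<^sup>2 * (if prefix (w@[0]) x then (mu x)\<^sup>2 else 0)
                            + p\<^sup>2 * (if prefix (w@[2]) x then (mu x)\<^sup>2 else 0)" for x
    using pfx_excl[of w 0 x 2] by (auto simp: aw_def power2_eq_square)
  have w0: "set (w@[0]) \<subseteq> {0,2}" "length (w@[0]) \<le> m" and w2: "set (w@[2]) \<subseteq> {0,2}" "length (w@[2]) \<le> m"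
    using w by auto
  have m0: "mu (w @ [0]) = p * mu w" and m2: "mu (w @ [2]) = (1 - p) * mu w"
    using mu_snoc[OF w(1), of 0] mu_snoc[OF w(1), of 2] by (auto simp: cf_def)
  let ?Q = "\<Sum>j = 0..m - length w - 1. qq ^ j"
  have "(\<Sum>x\<in>words_upto m. aw w x * aw w x)
     = (1-p)\<^sup>2 * (\<Sum>x\<in>words_upto m. if prefix (w@[0]) x then (mu x)\<^sup>2 else 0)
       + p\<^sup>2 * (\<Sum>x\<in>words_upto m. if prefix (w@[2]) x then (mu x)\<^sup>2 else 0)"
    by (simp only: pt sum.distrib sum_distrib_left)
  also have "\<dots> = (1-p)\<^sup>2 * ((p * mu w)\<^sup>2 * ?Q) + p\<^sup>2 * (((1 - p) * mu w)\<^sup>2 * ?Q)"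
    using Gsum[OF w0] Gsum[OF w2] by (simp add: m0 m2)
  also have "\<dots> = 2 * p\<^sup>2 * (1 - p)\<^sup>2 * (mu w)\<^sup>2 * ?Q"
    by (simp add: power2_eq_square algebra_simps)
  finally show ?thesis .
qed

end



definition spn :: "'i set \<Rightarrow> ('i \<Rightarrow> real \<Rightarrow> complex) \<Rightarrow> (real \<Rightarrow> complex) set" where
  "spn I e = {f. \<exists>c. f = (\<lambda>x. \<Sum>i\<in>I. c i * e i x)}"

lemma spn_lin:
  assumes "f \<in> spn I e" "g \<in> spn I e"
  shows "(\<lambda>x. a * f x + b * g x) \<in> spn I e"
proof -
  obtain c1 c2 where f: "f = (\<lambda>x. \<Sum>i\<in>I. c1 i * e i x)" and g: "g = (\<lambda>x. \<Sum>i\<in>I. c2 i * e i x)"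
    using assms by (auto simp: spn_def)
  have "(\<lambda>x. a * f x + b * g x) = (\<lambda>x. \<Sum>i\<in>I. (a * c1 i + b * c2 i) * e i x)"
    by (simp add: f g fun_eq_iff sum_distrib_left sum.distrib algebra_simps)
  then show ?thesis unfolding spn_def by (auto intro!: exI[of _ "\<lambda>i. a * c1 i + b * c2 i"])
qed

lemma spn_zero: "(\<lambda>x. 0) \<in> spn I e"
  unfolding spn_def by (rule CollectI, rule exI[of _ "\<lambda>i. 0"]) simp

lemma spn_sum:
  assumes "finite J" "\<forall>j\<in>J. g j \<in> spn I e"
  shows "(\<lambda>x. \<Sum>j\<in>J. d j * g j x) \<in> spn I e"
  using assms
proof (induction J rule: finite_induct)
  case empty then show ?case by (simp add: spn_zero)
next
  case (insert j J)
  have "(\<lambda>x. d j * g j x + 1 * (\<Sum>j\<in>J. d j * g j x)) \<in> spn I e"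
    using insert by (intro spn_lin) auto
  then show ?case using insert by simp
qed

lemma spn_mem:
  assumes "finite I" "i \<in> I"
  shows "e i \<in> spn I e"
proof -
  have "(\<Sum>j\<in>I. (if j = i then 1 else 0) * e j x) = e i x" for x
  proof -
    have "(\<Sum>j\<in>I. (if j = i then 1 else 0) * e j x) = (\<Sum>j\<in>I. if j = i then e j x else 0)"
      by (rule sum.cong) auto
    also have "\<dots> = e i x" using assms by (simp add: sum.delta)
    finally show ?thesis .
  qed
  then have "e i = (\<lambda>x. \<Sum>j\<in>I. (if j = i then 1 else 0) * e j x)" by simp
  then show ?thesis unfolding spn_def by (auto intro!: exI[of _ "\<lambda>j. if j = i then 1 else 0"])
qed

lemma spn_mono:
  assumes "finite I" "\<forall>i\<in>I. e i \<in> spn J e'"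
  shows "spn I e \<subseteq> spn J e'"
proof
  fix f assume "f \<in> spn I e"
  then obtain c where "f = (\<lambda>x. \<Sum>i\<in>I. c i * e i x)" by (auto simp: spn_def)
  then show "f \<in> spn J e'" using spn_sum[OF assms, of c] by simp
qed

lemma Fm_eq: "Fm m = spn (words_upto m) (\<lambda>u. indicator (Cw u))"
  by (simp add: Fm_def spn_def)

lemma finite_haar_index: "finite (haar_index m)"
  by (simp add: haar_index_def finite_words_upto finite_imageI)

lemma ind_split: "(indicator (Cw w) x :: complex) = indicator (Cw (w @ [0])) x + indicator (Cw (w @ [2])) x"
proof -
  have "x \<in> Cw w \<longleftrightarrow> x \<in> Cw (w @ [0]) \<or> x \<in> Cw (w @ [2])" using Cw_split by blast
  moreover have "\<not> (x \<in> Cw (w @ [0]) \<and> x \<in> Cw (w @ [2]))" using Cw_split_disj by blast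
  ultimately show ?thesis by (auto split: split_indicator)
qed

lemma words_upto_pred: "m \<ge> 1 \<Longrightarrow> w \<in> words_upto (m - 1) \<Longrightarrow> set w \<subseteq> {0,2} \<and> length w + 1 \<le> m"
  by (auto simp: words_upto_def)

lemma words_upto_snoc: "m \<ge> 1 \<Longrightarrow> w \<in> words_upto (m - 1) \<Longrightarrow> a \<in> {0,2} \<Longrightarrow> w @ [a] \<in> words_upto m"
  by (auto simp: words_upto_def)

lemma strict_prefix_next:
  assumes "strict_prefix u v" "set v \<subseteq> {0,2}"
  shows "\<exists>a\<in>{0,2}. prefix (u @ [a]) v"
proof -
  obtain z where z: "v = u @ z" "z \<noteq> []" using assms(1)
    by (auto simp: strict_prefix_def prefix_def)
  then obtain a z' where "z = a # z'" by (cases z) auto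
  then show ?thesis using z assms(2) by (auto simp: prefix_def)
qed

context cm begin

lemma ip_hw_hw:
  assumes u: "set u \<subseteq> {0,2}" and v: "set v \<subseteq> {0,2}"
  shows "ip M (hw p u) (hw p v) = complex_of_real (if u = v then p * (1 - p) * mu u else 0)"
proof -
  have v0: "set (v @ [0]) \<subseteq> {0,2}" and v2: "set (v @ [2]) \<subseteq> {0,2}" using v by auto
  have e: "ip M (hw p u) (hw p v) = complex_of_real ((1 - p) * aw u (v @ [0]) - p * aw u (v @ [2]))"
    by (subst (2) hw_eq, subst ip_lin_right) (auto intro!: bm_ind Cw_borel bm_hw simp: ip_hw_ind[OF u v0] ip_hw_ind[OF u v2])
  have m0: "mu (v @ [0]) = p * mu v" and m2: "mu (v @ [2]) = (1 - p) * mu v"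
    using mu_snoc[OF v, of 0] mu_snoc[OF v, of 2] by (auto simp: cf_def)
  show ?thesis
  proof (cases "u = v")
    case True
    have a0: "aw u (v @ [0]) = (1 - p) * (p * mu v)" using True by (simp add: aw_def m0)
    have a2: "aw u (v @ [2]) = - p * ((1 - p) * mu v)" using True by (simp add: aw_def m2)
    have r: "(1 - p) * aw u (v @ [0]) - p * aw u (v @ [2]) = p * (1 - p) * mu u"
      unfolding a0 a2 using True by (simp add: algebra_simps)
    show ?thesis unfolding e r using True by simp
  next
    case False
    have key: "prefix (u @ [c]) (v @ [a]) \<longleftrightarrow> prefix (u @ [c]) v" for c a
      using False by auto
    show ?thesis
    proof (cases "prefix (u @ [0]) v")
      case True
      then show ?thesis using False by (simp add: e aw_def key m0 m2 algebra_simps)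
    next
      case F0: False
      show ?thesis
      proof (cases "prefix (u @ [2]) v")
        case True
        then show ?thesis using False F0 by (simp add: e aw_def key m0 m2 algebra_simps)
      next
        case F2: False
        then show ?thesis using False F0 by (simp add: e aw_def key)
      qed
    qed
  qed
qed

lemma ip_phi_phi: "ip M phi phi = 1"
  using ip_ind_phi[of "[]"] by (simp add: phi_eq[symmetric] mu_Nil)

lemma ip_phi_hw: "set w \<subseteq> {0,2} \<Longrightarrow> ip M phi (hw p w) = 0"
  using ip_ind_hw[of w "[]"] by (simp add: phi_eq[symmetric] aw_def)

lemma ip_hw_phi: "set w \<subseteq> {0,2} \<Longrightarrow> ip M (hw p w) phi = 0"
  using ip_phi_hw[of w] ip_cnj[of M phi "hw p w"] by simp

lemma ind_in_haar_span:
  assumes m: "m \<ge> 1"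
  shows "u \<in> words_upto m \<Longrightarrow> indicator (Cw u) \<in> spn (haar_index m) (haar p)"
proof (induction u rule: rev_induct)
  case Nil
  have "haar p None \<in> spn (haar_index m) (haar p)"
    by (rule spn_mem[OF finite_haar_index]) (auto simp: haar_index_def)
  moreover have "haar p None = indicator (Cw [])" by (simp add: haar_def phi_eq)
  ultimately show ?case by simp
next
  case (snoc a u)
  then have u: "u \<in> words_upto m" and u1: "u \<in> words_upto (m - 1)" and a: "a \<in> {0,2}"
    by (auto simp: words_upto_def)
  have iu: "indicator (Cw u) \<in> spn (haar_index m) (haar p)" using snoc.IH[OF u] .
  have "haar p (Some u) \<in> spn (haar_index m) (haar p)"
  proof (rule spn_mem[OF finite_haar_index])
    show "Some u \<in> haar_index m" using u1 unfolding haar_index_def by blast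
  qed
  moreover have "haar p (Some u) = hw p u" by (simp add: haar_def)
  ultimately have hu: "hw p u \<in> spn (haar_index m) (haar p)" by simp
  from a consider "a = 0" | "a = 2" by auto
  then show ?case
  proof cases
    case 1
    have "indicator (Cw (u @ [a])) = (\<lambda>x. complex_of_real p * indicator (Cw u) x + 1 * hw p u x)"
      using 1 by (simp add: fun_eq_iff hw_def ind_split[of u] algebra_simps)
    then show ?thesis using spn_lin[OF iu hu, where a="complex_of_real p" and b=1] by simp
  next
    case 2
    have "indicator (Cw (u @ [a])) = (\<lambda>x. complex_of_real (1 - p) * indicator (Cw u) x + (-1) * hw p u x)"
      using 2 by (simp add: fun_eq_iff hw_def ind_split[of u] algebra_simps)
    then show ?thesis using spn_lin[OF iu hu, where a="complex_of_real (1 - p)" and b="-1"] by simp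
  qed
qed

lemma Fm_sub_haar: "m \<ge> 1 \<Longrightarrow> Fm m \<subseteq> spn (haar_index m) (haar p)"
  unfolding Fm_eq by (rule spn_mono) (auto simp: finite_words_upto ind_in_haar_span)

lemma haar_in_Fm:
  assumes m: "m \<ge> 1" and i: "i \<in> haar_index m"
  shows "haar p i \<in> Fm m"
proof (cases i)
  case None
  have "indicator (Cw []) \<in> spn (words_upto m) (\<lambda>u. indicator (Cw u))"
    by (rule spn_mem[OF finite_words_upto, of "[]" m "\<lambda>u. indicator (Cw u)", simplified]) (auto simp: words_upto_def)
  then show ?thesis using None by (simp add: Fm_eq haar_def phi_eq)
next
  case (Some w)
  then have w: "w \<in> words_upto (m - 1)" using i by (auto simp: haar_index_def)
  have "indicator (Cw (w @ [a])) \<in> spn (words_upto m) (\<lambda>u. indicator (Cw u))" if "a \<in> {0,2}" for a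
    by (rule spn_mem[OF finite_words_upto, of _ _ "\<lambda>u. indicator (Cw u)", simplified])
       (auto simp: words_upto_snoc[OF m w that])
  then have "hw p w \<in> spn (words_upto m) (\<lambda>u. indicator (Cw u))"
    unfolding hw_eq by (intro spn_lin) auto
  then show ?thesis using Some by (simp add: Fm_eq haar_def)
qed

lemma haar_ip:
  assumes m: "m \<ge> 1" and i: "i \<in> haar_index m" and j: "j \<in> haar_index m"
  shows "ip M (haar p i) (haar p j) = (if i = j then (case i of None \<Rightarrow> 1
            | Some w \<Rightarrow> complex_of_real (p * (1 - p) * mu w)) else 0)"
proof -
  have ws: "set w \<subseteq> {0,2}" if "Some w \<in> haar_index m" for w
    using that by (auto simp: haar_index_def words_upto_def)
  show ?thesis
  proof (cases i)
    case None
    then show ?thesis using ws[of _] j by (cases j) (auto simp: haar_def ip_phi_phi ip_phi_hw)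
  next
    case (Some u)
    then show ?thesis using ws i j by (cases j) (auto simp: haar_def ip_hw_phi ip_hw_hw)
  qed
qed

lemma haar_basis:
  assumes m: "m \<ge> 1"
  shows "orthogonal_basis_of M (haar_index m) (haar p) (Fm m)"
  unfolding orthogonal_basis_of_def
proof (intro conjI ballI impI)
  show "finite (haar_index m)" by (rule finite_haar_index)
next
  fix i assume i: "i \<in> haar_index m"
  show "haar p i \<in> Fm m" by (rule haar_in_Fm[OF m i])
  show "ip M (haar p i) (haar p i) \<noteq> 0"
  proof (cases i)
    case (Some w)
    then have "set w \<subseteq> {0,2}" using i by (auto simp: haar_index_def words_upto_def)
    then have "mu w > 0" by (rule mu_pos)
    then show ?thesis using haar_ip[OF m i i] Some p0 p1 by simp
  qed (use haar_ip[OF m i i] in simp)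
next
  fix i j assume "i \<in> haar_index m" "j \<in> haar_index m" "i \<noteq> j"
  then show "ip M (haar p i) (haar p j) = 0" using haar_ip[OF m] by simp
next
  fix f assume "f \<in> Fm m"
  then have "f \<in> spn (haar_index m) (haar p)" using Fm_sub_haar[OF m] by blast
  then show "\<exists>c. f = (\<lambda>x. \<Sum>i\<in>haar_index m. c i * haar p i x)" by (simp add: spn_def)
qed

end



context cm begin

lemma Q_pos: "0 < (\<Sum>j = 0..n. qq ^ j)"
  by (rule sum_pos) (auto simp: qq_pos)

lemma P3:
  assumes m: "m \<ge> 1"
  shows "\<forall>w\<in>words_upto (m - 1).
          ip M (hw p w) (Km M m phi) =
            complex_of_real (p * (1 - p) * (2 * p - 1) * (measure M (Cw w))\<^sup>2
              * (\<Sum>j = 0..m - length w - 1. qq ^ j))"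
proof
  fix w assume "w \<in> words_upto (m - 1)"
  then have w: "set w \<subseteq> {0,2}" "length w + 1 \<le> m" using words_upto_pred[OF m] by auto
  show "ip M (hw p w) (Km M m phi) = complex_of_real (p * (1 - p) * (2 * p - 1) * (measure M (Cw w))\<^sup>2
              * (\<Sum>j = 0..m - length w - 1. qq ^ j))"
    by (simp only: ip_hw_Km_phi[OF w(1)] T_sum[OF w])
qed

lemma P4:
  assumes m: "m \<ge> 1"
  shows "\<forall>w\<in>words_upto (m - 1).
          ip M (hw p w) (Km M m (hw p w)) =
            complex_of_real (2 * p\<^sup>2 * (1 - p)\<^sup>2 * (measure M (Cw w))\<^sup>2
              * (\<Sum>j = 0..m - length w - 1. qq ^ j))"
proof
  fix w assume "w \<in> words_upto (m - 1)"
  then have w: "set w \<subseteq> {0,2}" "length w + 1 \<le> m" using words_upto_pred[OF m] by auto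
  show "ip M (hw p w) (Km M m (hw p w)) = complex_of_real (2 * p\<^sup>2 * (1 - p)\<^sup>2 * (measure M (Cw w))\<^sup>2
              * (\<Sum>j = 0..m - length w - 1. qq ^ j))"
    by (simp only: ip_hw_Km_hw[OF w(1) w(1)] D_sum[OF w])
qed

lemma P5a_single:
  assumes u: "set u \<subseteq> {0,2}" and v: "set v \<subseteq> {0,2}" and nc: "\<not> prefix u v" "\<not> prefix v u"
  shows "ip M (hw p u) (Km M m (hw p v)) = 0"
proof -
  have z: "aw v x * aw u x = 0" for x
  proof (rule ccontr)
    assume "aw v x * aw u x \<noteq> 0"
    then have "prefix v x" "prefix u x" using aw_nz by auto
    then have "prefix u v \<or> prefix v u" using prefix_same_cases by blast
    then show False using nc by blast
  qed
  have "(\<Sum>x\<in>words_upto m. aw v x * aw u x) = 0" by (intro sum.neutral ballI z)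
  then show ?thesis unfolding ip_hw_Km_hw[OF u v] by simp
qed

lemma P5a:
  "\<forall>u\<in>words_upto (m - 1). \<forall>v\<in>words_upto (m - 1).
          u \<noteq> v \<and> \<not> prefix u v \<and> \<not> prefix v u \<longrightarrow> ip M (hw p u) (Km M m (hw p v)) = 0"
proof (intro ballI impI)
  fix u v assume u: "u \<in> words_upto (m - 1)" and v: "v \<in> words_upto (m - 1)"
    and h: "u \<noteq> v \<and> \<not> prefix u v \<and> \<not> prefix v u"
  show "ip M (hw p u) (Km M m (hw p v)) = 0"
    using P5a_single[OF words_upto_set[OF u] words_upto_set[OF v]] h by blast
qed

lemma P5b:
  assumes m: "m \<ge> 1"
  shows "\<forall>u\<in>words_upto (m - 1). \<forall>v\<in>words_upto (m - 1).
          strict_prefix u v \<and> prefix (u @ [0]) v \<longrightarrow>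
            ip M (hw p u) (Km M m (hw p v)) =
              complex_of_real (p * (1 - p)\<^sup>2 * (2 * p - 1) * (measure M (Cw v))\<^sup>2
                * (\<Sum>j = 0..m - length v - 1. qq ^ j))"
proof (intro ballI impI)
  fix u v assume "u \<in> words_upto (m - 1)" "v \<in> words_upto (m - 1)" and h: "strict_prefix u v \<and> prefix (u @ [0]) v"
  then have u: "set u \<subseteq> {0,2}" and v: "set v \<subseteq> {0,2}" "length v + 1 \<le> m"
    using words_upto_pred[OF m] by auto
  have pt: "aw v x * aw u x = (1 - p) * (mu x * aw v x)" for x
  proof (cases "aw v x = 0")
    case False
    then have "prefix v x" using aw_nz by auto
    then have "prefix (u @ [0]) x" using h prefix_order.trans by blast
    then have "aw u x = (1 - p) * mu x" by (simp add: aw_def)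
    then show ?thesis by simp
  qed simp
  have "(\<Sum>x\<in>words_upto m. aw v x * aw u x) = (1 - p) * (\<Sum>x\<in>words_upto m. mu x * aw v x)"
    by (simp only: pt sum_distrib_left)
  also have "\<dots> = p * (1 - p)\<^sup>2 * (2 * p - 1) * (mu v)\<^sup>2 * (\<Sum>j = 0..m - length v - 1. qq ^ j)"
    by (simp add: T_sum[OF v] power2_eq_square algebra_simps)
  finally show "ip M (hw p u) (Km M m (hw p v)) =
              complex_of_real (p * (1 - p)\<^sup>2 * (2 * p - 1) * (measure M (Cw v))\<^sup>2
                * (\<Sum>j = 0..m - length v - 1. qq ^ j))"
    by (simp add: ip_hw_Km_hw[OF u v(1)])
qed

lemma P5c:
  assumes m: "m \<ge> 1"
  shows "\<forall>u\<in>words_upto (m - 1). \<forall>v\<in>words_upto (m - 1).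
          strict_prefix u v \<and> prefix (u @ [2]) v \<longrightarrow>
            ip M (hw p u) (Km M m (hw p v)) =
              complex_of_real (- (p\<^sup>2 * (1 - p) * (2 * p - 1) * (measure M (Cw v))\<^sup>2
                * (\<Sum>j = 0..m - length v - 1. qq ^ j)))"
proof (intro ballI impI)
  fix u v assume "u \<in> words_upto (m - 1)" "v \<in> words_upto (m - 1)" and h: "strict_prefix u v \<and> prefix (u @ [2]) v"
  then have u: "set u \<subseteq> {0,2}" and v: "set v \<subseteq> {0,2}" "length v + 1 \<le> m"
    using words_upto_pred[OF m] by auto
  have pt: "aw v x * aw u x = (- p) * (mu x * aw v x)" for x
  proof (cases "aw v x = 0")
    case False
    then have "prefix v x" using aw_nz by auto
    then have h2: "prefix (u @ [2]) x" using h prefix_order.trans by blast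
    then have "\<not> prefix (u @ [0]) x" using pfx_excl[OF h2, of 0] by simp
    then have "aw u x = - p * mu x" using h2 by (simp add: aw_def)
    then show ?thesis by simp
  qed simp
  have "(\<Sum>x\<in>words_upto m. aw v x * aw u x) = (- p) * (\<Sum>x\<in>words_upto m. mu x * aw v x)"
    by (simp only: pt sum_distrib_left)
  also have "\<dots> = - (p\<^sup>2 * (1 - p) * (2 * p - 1) * (mu v)\<^sup>2 * (\<Sum>j = 0..m - length v - 1. qq ^ j))"
    by (simp add: T_sum[OF v] power2_eq_square algebra_simps)
  finally show "ip M (hw p u) (Km M m (hw p v)) =
              complex_of_real (- (p\<^sup>2 * (1 - p) * (2 * p - 1) * (measure M (Cw v))\<^sup>2
                * (\<Sum>j = 0..m - length v - 1. qq ^ j)))"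
    by (simp add: ip_hw_Km_hw[OF u v(1)])
qed

abbreviation rr where "rr w \<equiv> sqrt (p * (1 - p) * measure M (Cw w))"

lemma rr_pos: "set w \<subseteq> {0,2} \<Longrightarrow> rr w > 0"
  using mu_pos[of w] p0 p1 by simp

lemma rr_sq: "set w \<subseteq> {0,2} \<Longrightarrow> rr w * rr w = p * (1 - p) * mu w"
  using mu_pos[of w] p0 p1 by simp

lemma eb_None: "ebasis M p None = phi" by (simp add: ebasis_def)

lemma eb_Some: "ebasis M p (Some w) = (\<lambda>x. hw p w x / complex_of_real (rr w))"
  by (simp add: ebasis_def)

lemma bm_eb: "bm M (ebasis M p i)"
  by (cases i) (auto simp: eb_None eb_Some bm_phi intro!: bm_div bm_hw)

lemma haar_index_set: "i \<in> haar_index m \<Longrightarrow> i = Some w \<Longrightarrow> set w \<subseteq> {0,2}"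
  by (auto simp: haar_index_def words_upto_def)

lemma eb_ortho:
  "\<forall>i\<in>haar_index m. \<forall>j\<in>haar_index m. ip M (ebasis M p i) (ebasis M p j) = (if i = j then 1 else 0)"
proof (intro ballI)
  fix i j assume i: "i \<in> haar_index m" and j: "j \<in> haar_index m"
  show "ip M (ebasis M p i) (ebasis M p j) = (if i = j then 1 else 0)"
  proof (cases i)
    case None
    show ?thesis
    proof (cases j)
      case (Some v)
      then show ?thesis using None haar_index_set[OF j Some]
        by (simp add: eb_None eb_Some ip_div_right ip_phi_hw)
    qed (simp add: None eb_None ip_phi_phi)
  next
    case (Some u)
    note Su = Some
    have u: "set u \<subseteq> {0,2}" by (rule haar_index_set[OF i Some])
    show ?thesis
    proof (cases j)
      case None
      then show ?thesis using Some u by (simp add: eb_None eb_Some ip_div_left ip_hw_phi)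
    next
      case (Some v)
      note Sv = Some
      have v: "set v \<subseteq> {0,2}" by (rule haar_index_set[OF j Sv])
      have e: "ip M (ebasis M p i) (ebasis M p j)
          = complex_of_real (if u = v then p * (1 - p) * mu u else 0) / complex_of_real (rr v) / complex_of_real (rr u)"
        using Su Sv by (simp add: eb_Some ip_div_left ip_div_right ip_hw_hw[OF u v])
      show ?thesis
      proof (cases "u = v")
        case True
        have X: "p * (1 - p) * mu u > 0" using p0 p1 mu_pos[OF u] by simp
        have "p * (1 - p) * mu u / rr u / rr u = p * (1 - p) * mu u / (rr u * rr u)"
          by (simp add: divide_divide_eq_left)
        also have "\<dots> = 1" using rr_sq[OF u] X p0 p1 mu_pos[OF u] by simp
        finally have "p * (1 - p) * mu u / rr u / rr u = 1" .
        then have "complex_of_real (p * (1 - p) * mu u) / complex_of_real (rr u) / complex_of_real (rr u) = 1"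
          by (metis of_real_1 of_real_divide)
        then show ?thesis using e True Su Sv by simp
      next
        case False
        then show ?thesis using e Su Sv by simp
      qed
    qed
  qed
qed

lemma eb_span:
  assumes m: "m \<ge> 1"
  shows "\<forall>f\<in>Fm m. \<exists>c. f = (\<lambda>x. \<Sum>i\<in>haar_index m. c i * ebasis M p i x)"
proof
  fix f assume f: "f \<in> Fm m"
  have "spn (haar_index m) (haar p) \<subseteq> spn (haar_index m) (ebasis M p)"
  proof (rule spn_mono[OF finite_haar_index], intro ballI)
    fix i assume i: "i \<in> haar_index m"
    have ei: "ebasis M p i \<in> spn (haar_index m) (ebasis M p)" by (rule spn_mem[OF finite_haar_index i])
    show "haar p i \<in> spn (haar_index m) (ebasis M p)"
    proof (cases i)
      case None
      then show ?thesis using ei by (simp add: haar_def eb_None)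
    next
      case (Some w)
      have w: "set w \<subseteq> {0,2}" by (rule haar_index_set[OF i Some])
      have "(\<lambda>x. complex_of_real (rr w) * ebasis M p i x + 0 * ebasis M p i x) = hw p w"
        using rr_pos[OF w] Some p0 p1 mu_pos[OF w] by (simp add: eb_Some fun_eq_iff)
      moreover have "(\<lambda>x. complex_of_real (rr w) * ebasis M p i x + 0 * ebasis M p i x) \<in> spn (haar_index m) (ebasis M p)"
        by (rule spn_lin[OF ei ei])
      ultimately show ?thesis using Some by (simp add: haar_def)
    qed
  qed
  then have "f \<in> spn (haar_index m) (ebasis M p)" using f Fm_sub_haar[OF m] by blast
  then show "\<exists>c. f = (\<lambda>x. \<Sum>i\<in>haar_index m. c i * ebasis M p i x)" by (simp add: spn_def)
qed

lemma eb_selfadj: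
  "\<forall>i\<in>haar_index m. \<forall>j\<in>haar_index m.
          ip M (ebasis M p i) (Km M m (ebasis M p j)) = cnj (ip M (ebasis M p j) (Km M m (ebasis M p i)))"
  by (intro ballI Km_selfadj bm_eb)

lemma eb_Km_Some_Some:
  "ip M (ebasis M p (Some v)) (Km M m (ebasis M p (Some u)))
     = ip M (hw p v) (Km M m (hw p u)) / complex_of_real (rr u) / complex_of_real (rr v)"
  by (simp add: eb_Some Km_div ip_div_left ip_div_right)

lemma eb_Km_Some_None:
  "ip M (ebasis M p (Some w)) (Km M m (ebasis M p None)) = ip M (hw p w) (Km M m phi) / complex_of_real (rr w)"
  by (simp add: eb_Some eb_None ip_div_left)

lemma eb_tree:
  "\<forall>u\<in>words_upto (m - 1). \<forall>v\<in>words_upto (m - 1).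
          \<not> prefix u v \<and> \<not> prefix v u \<longrightarrow> ip M (ebasis M p (Some v)) (Km M m (ebasis M p (Some u))) = 0"
  by (auto simp: eb_Km_Some_Some intro!: P5a_single words_upto_set)

lemma hw_Km_hw_zero:
  assumes m: "m \<ge> 1" and h: "2 * p - 1 = 0"
    and u: "u \<in> words_upto (m - 1)" and v: "v \<in> words_upto (m - 1)" and uv: "u \<noteq> v"
  shows "ip M (hw p u) (Km M m (hw p v)) = 0"
proof -
  have su: "set u \<subseteq> {0,2}" and sv: "set v \<subseteq> {0,2}" using u v by (auto simp: words_upto_def)
  have one: "ip M (hw p u) (Km M m (hw p v)) = 0" if sp: "strict_prefix u v" "u \<in> words_upto (m - 1)" "v \<in> words_upto (m - 1)" for u v
  proof -
    have "set v \<subseteq> {0,2}" using sp(3) by (auto simp: words_upto_def)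
    then obtain a where a: "a \<in> {0,2}" "prefix (u @ [a]) v" using strict_prefix_next[OF sp(1)] by blast
    then consider "prefix (u @ [0]) v" | "prefix (u @ [2]) v" by auto
    then show ?thesis
    proof cases
      case 1 then show ?thesis using P5b[OF m] sp h by simp
    next
      case 2 then show ?thesis using P5c[OF m] sp h by simp
    qed
  qed
  show ?thesis
  proof (cases "prefix u v")
    case True
    then show ?thesis using one[of u v] u v uv by (simp add: strict_prefix_def)
  next
    case F1: False
    show ?thesis
    proof (cases "prefix v u")
      case True
      then have "ip M (hw p v) (Km M m (hw p u)) = 0" using one[of v u] u v uv by (simp add: strict_prefix_def)
      then show ?thesis using Km_selfadj[OF bm_hw bm_hw, of u m v] by simp
    next
      case False
      then show ?thesis using P5a_single[OF su sv F1] by simp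
    qed
  qed
qed

lemma eb_diag:
  assumes m: "m \<ge> 1"
  shows "(\<forall>i\<in>haar_index m. \<forall>j\<in>haar_index m.
          i \<noteq> j \<longrightarrow> ip M (ebasis M p i) (Km M m (ebasis M p j)) = 0) \<longleftrightarrow> p = 1 / 2"
proof
  assume H: "\<forall>i\<in>haar_index m. \<forall>j\<in>haar_index m.
          i \<noteq> j \<longrightarrow> ip M (ebasis M p i) (Km M m (ebasis M p j)) = 0"
  have e: "[] \<in> words_upto (m - 1)" by (simp add: words_upto_def)
  then have "Some [] \<in> haar_index m" "None \<in> haar_index m" by (auto simp: haar_index_def)
  then have "ip M (ebasis M p (Some [])) (Km M m (ebasis M p None)) = 0" using H by blast
  then have "ip M (hw p []) (Km M m phi) = 0" using rr_pos[of "[]"] p0 p1 mu_Nil by (simp add: eb_Km_Some_None)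
  moreover have "ip M (hw p []) (Km M m phi) = complex_of_real (p * (1 - p) * (2 * p - 1) * (mu [])\<^sup>2
       * (\<Sum>j = 0..m - length ([]::nat list) - 1. qq ^ j))"
    using P3[OF m] e by blast
  ultimately have "p * (1 - p) * (2 * p - 1) * (mu [])\<^sup>2 * (\<Sum>j = 0..m - length ([]::nat list) - 1. qq ^ j) = 0"
    by (simp only: of_real_eq_0_iff)
  then have "p * (1 - p) * (2 * p - 1) = 0" using Q_pos[of "m - length ([]::nat list) - 1"] mu_Nil by simp
  then show "p = 1 / 2" using p0 p1 by simp
next
  assume "p = 1 / 2"
  then have h: "2 * p - 1 = 0" by simp
  have z3: "ip M (hw p w) (Km M m phi) = 0" if "w \<in> words_upto (m - 1)" for w
    using P3[OF m] that h by simp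
  show "\<forall>i\<in>haar_index m. \<forall>j\<in>haar_index m.
          i \<noteq> j \<longrightarrow> ip M (ebasis M p i) (Km M m (ebasis M p j)) = 0"
  proof (intro ballI impI)
    fix i j assume i: "i \<in> haar_index m" and j: "j \<in> haar_index m" and ij: "i \<noteq> j"
    show "ip M (ebasis M p i) (Km M m (ebasis M p j)) = 0"
    proof (cases i)
      case None
      then obtain w where Some: "j = Some w" using ij by (cases j) auto
      then have w: "w \<in> words_upto (m - 1)" using j by (auto simp: haar_index_def)
      have "ip M (ebasis M p j) (Km M m (ebasis M p i)) = 0"
        using None Some z3[OF w] by (simp add: eb_Km_Some_None)
      then show ?thesis using Km_selfadj[OF bm_eb bm_eb, of i m j] by simp
    next
      case (Some u)
      note Su = Some
      then have u: "u \<in> words_upto (m - 1)" using i by (auto simp: haar_index_def)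
      show ?thesis
      proof (cases j)
        case None
        then show ?thesis using Some z3[OF u] by (simp add: eb_Km_Some_None)
      next
        case (Some v)
        note Sv = Some
        then have v: "v \<in> words_upto (m - 1)" using j by (auto simp: haar_index_def)
        have "u \<noteq> v" using ij Su Sv by simp
        then show ?thesis using Su Sv hw_Km_hw_zero[OF m h u v] by (simp add: eb_Km_Some_Some)
      qed
    qed
  qed
qed

end

theorem theorem4p1:
  fixes p :: real and m :: nat and M :: "real measure"
  assumes p: "0 < p" "p < 1"
    and m: "m \<ge> 1"
    and M_prob: "prob_space M"
    and M_borel: "sets M = sets borel"
    and M_unit: "emeasure M {0..1} = 1"
    and M_selfsim: "\<forall>A\<in>sets borel.
        emeasure M A = ennreal p * emeasure M (S 0 -` A) + ennreal (1 - p) * emeasure M (S 2 -` A)"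
  defines "q \<equiv> p\<^sup>2 + (1 - p)\<^sup>2"
  shows
    \<comment> \<open>(1)\<close>
    "orthogonal_basis_of M (haar_index m) (haar p) (Fm m)
     \<and> (\<forall>w\<in>words_upto (m - 1).
          ip M (hw p w) (hw p w) = complex_of_real (p * (1 - p) * measure M (Cw w)))
    \<comment> \<open>(2)\<close>
     \<and> (\<forall>f\<in>Fm m. Km M m f \<in> Fm m)
     \<and> (\<forall>f\<in>L2 M. (\<forall>g\<in>Fm m. ip M g f = 0) \<longrightarrow> Km M m f = (\<lambda>x. 0))
    \<comment> \<open>(3)\<close>
     \<and> (\<forall>w\<in>words_upto (m - 1).
          ip M (hw p w) (Km M m phi) =
            complex_of_real (p * (1 - p) * (2 * p - 1) * (measure M (Cw w))\<^sup>2
              * (\<Sum>j = 0..m - length w - 1. q ^ j)))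
    \<comment> \<open>(4)\<close>
     \<and> (\<forall>w\<in>words_upto (m - 1).
          ip M (hw p w) (Km M m (hw p w)) =
            complex_of_real (2 * p\<^sup>2 * (1 - p)\<^sup>2 * (measure M (Cw w))\<^sup>2
              * (\<Sum>j = 0..m - length w - 1. q ^ j)))
    \<comment> \<open>(5)\<close>
     \<and> (\<forall>u\<in>words_upto (m - 1). \<forall>v\<in>words_upto (m - 1).
          u \<noteq> v \<and> \<not> prefix u v \<and> \<not> prefix v u \<longrightarrow> ip M (hw p u) (Km M m (hw p v)) = 0)
     \<and> (\<forall>u\<in>words_upto (m - 1). \<forall>v\<in>words_upto (m - 1).
          strict_prefix u v \<and> prefix (u @ [0]) v \<longrightarrow>
            ip M (hw p u) (Km M m (hw p v)) =
              complex_of_real (p * (1 - p)\<^sup>2 * (2 * p - 1) * (measure M (Cw v))\<^sup>2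
                * (\<Sum>j = 0..m - length v - 1. q ^ j)))
     \<and> (\<forall>u\<in>words_upto (m - 1). \<forall>v\<in>words_upto (m - 1).
          strict_prefix u v \<and> prefix (u @ [2]) v \<longrightarrow>
            ip M (hw p u) (Km M m (hw p v)) =
              complex_of_real (- (p\<^sup>2 * (1 - p) * (2 * p - 1) * (measure M (Cw v))\<^sup>2
                * (\<Sum>j = 0..m - length v - 1. q ^ j))))
    \<comment> \<open>Consequences: orthonormal basis, self-adjoint matrix, tree-banded, diagonal iff p = 1/2\<close>
     \<and> (\<forall>i\<in>haar_index m. \<forall>j\<in>haar_index m.
          ip M (ebasis M p i) (ebasis M p j) = (if i = j then 1 else 0))
     \<and> (\<forall>f\<in>Fm m. \<exists>c. f = (\<lambda>x. \<Sum>i\<in>haar_index m. c i * ebasis M p i x))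
     \<and> (\<forall>i\<in>haar_index m. \<forall>j\<in>haar_index m.
          ip M (ebasis M p i) (Km M m (ebasis M p j)) = cnj (ip M (ebasis M p j) (Km M m (ebasis M p i))))
     \<and> (\<forall>u\<in>words_upto (m - 1). \<forall>v\<in>words_upto (m - 1).
          \<not> prefix u v \<and> \<not> prefix v u \<longrightarrow> ip M (ebasis M p (Some v)) (Km M m (ebasis M p (Some u))) = 0)
     \<and> ((\<forall>i\<in>haar_index m. \<forall>j\<in>haar_index m.
          i \<noteq> j \<longrightarrow> ip M (ebasis M p i) (Km M m (ebasis M p j)) = 0) \<longleftrightarrow> p = 1 / 2)"
proof -
  interpret cm p M using p M_prob M_borel M_unit M_selfsim by (simp add: cm_def)
  have qq: "q = qq" by (simp add: q_def qq_def)
  have N1: "\<forall>w\<in>words_upto (m - 1).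
          ip M (hw p w) (hw p w) = complex_of_real (p * (1 - p) * measure M (Cw w))"
    by (auto simp: ip_hw_hw words_upto_set)
  have K1: "\<forall>f\<in>Fm m. Km M m f \<in> Fm m"
    by (auto simp: Fm_def Km_def)
  have K2: "\<forall>f\<in>L2 M. (\<forall>g\<in>Fm m. ip M g f = 0) \<longrightarrow> Km M m f = (\<lambda>x. 0)"
  proof (intro ballI impI)
    fix f assume "(\<forall>g\<in>Fm m. ip M g f = 0)"
    moreover have "indicator (Cw u) \<in> Fm m" if "u \<in> words_upto m" for u
      unfolding Fm_eq by (rule spn_mem[OF finite_words_upto that])
    ultimately have "ip M (indicator (Cw u)) f = 0" if "u \<in> words_upto m" for u
      using that by blast
    then show "Km M m f = (\<lambda>x. 0)" by (simp add: Km_def)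
  qed
  show ?thesis unfolding qq
    using haar_basis[OF m] N1 K1 K2 P3[OF m] P4[OF m] P5a P5b[OF m] P5c[OF m]
      eb_ortho eb_span[OF m] eb_selfadj eb_tree eb_diag[OF m]
    by (intro conjI) assumption+
qed



end
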